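(* Let $\alpha$ be a badly approximable real number, i.e. $\inf_{q\ge1} q\,\|q\alpha\|>0$. There exists a constant $C(\alpha)>0$ such that for every integer $q\ge2$, $$\sum_{x=q}^{q^3}\frac{1}{\|\alpha x\|\,x\,(\log_2 x)^2}\le C(\alpha).$$
   Context: For a real number $x$, $\|x\|$ denotes the distance from $x$ to the nearest integer; $\log_2$ denotes the logarithm in base $2$. *)

theory Defs
  imports "HOL-Analysis.Analysis"
begin

definition dist_int :: "real \<Rightarrow> real" where
  "dist_int x = min (x - of_int \<lfloor>x\<rfloor>) (of_int \<lceil>x\<rceil> - x)"

end

theory Submission imports Defs "HOL-Library.Discrete_Functions" "HOL-Analysis.Harmonic_Numbers" begin


lemma dist_int_nonneg: "dist_int y \<ge> 0"
  unfolding dist_int_def by (simp add: le_of_int_ceiling)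

lemma ceil_le_floor1: "\<lceil>y\<rceil> \<le> \<lfloor>y\<rfloor> + 1"
  by (simp add: ceiling_le_iff) linarith

lemma dist_int_le_half: "dist_int y \<le> 1/2"
proof -
  have "real_of_int \<lceil>y\<rceil> \<le> real_of_int \<lfloor>y\<rfloor> + 1"
    using ceil_le_floor1[of y] by linarith
  then show ?thesis unfolding dist_int_def by linarith
qed

lemma dist_int_le: "dist_int y \<le> \<bar>y - of_int m\<bar>"
proof (cases "m \<le> \<lfloor>y\<rfloor>")
  case True
  then have "real_of_int m \<le> of_int \<lfloor>y\<rfloor>" by simp
  moreover have "of_int \<lfloor>y\<rfloor> \<le> y" by simp
  ultimately show ?thesis unfolding dist_int_def by linarith
next
  case False
  then have "m \<ge> \<lceil>y\<rceil>" using ceil_le_floor1[of y] by linarith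
  then have "real_of_int m \<ge> of_int \<lceil>y\<rceil>" by simp
  moreover have "of_int \<lceil>y\<rceil> \<ge> y" by simp
  ultimately show ?thesis unfolding dist_int_def by linarith
qed

lemma dist_int_cases: "dist_int y = y - of_int \<lfloor>y\<rfloor> \<or> dist_int y = of_int \<lceil>y\<rceil> - y"
  unfolding dist_int_def by linarith

lemma sep_bound:
  fixes S :: "nat set" and \<rho> :: "nat \<Rightarrow> real" and \<delta> :: real
  assumes dpos: "\<delta> > 0" and fin: "finite S"
    and bnd: "\<forall>x\<in>S. \<delta>/2 \<le> \<rho> x \<and> \<rho> x \<le> 1/2"
    and sep: "\<forall>x\<in>S. \<forall>y\<in>S. x \<noteq> y \<longrightarrow> \<delta> \<le> \<bar>\<rho> x - \<rho> y\<bar>"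
  shows "(\<Sum>x\<in>S. 1 / \<rho> x) \<le> (2 + harm (nat \<lfloor>1/(2*\<delta>)\<rfloor>)) / \<delta>"
proof -
  define b where "b x = nat \<lfloor>\<rho> x / \<delta>\<rfloor>" for x
  define M where "M = nat \<lfloor>1/(2*\<delta>)\<rfloor>"
  define G where "G j = (if j = 0 then 2/\<delta> else 1/(real j * \<delta>))" for j :: nat
  have Gnn: "G j \<ge> 0" for j using dpos by (simp add: G_def)
  have inj: "inj_on b S"
  proof (rule inj_onI)
    fix x y assume xS: "x \<in> S" and yS: "y \<in> S" and e: "b x = b y"
    have px: "\<rho> x / \<delta> \<ge> 0" and py: "\<rho> y / \<delta> \<ge> 0" using bnd xS yS dpos by auto
    have fx: "\<lfloor>\<rho> x / \<delta>\<rfloor> \<ge> 0" and fy: "\<lfloor>\<rho> y / \<delta>\<rfloor> \<ge> 0" using px py by simp_all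
    have "\<lfloor>\<rho> x / \<delta>\<rfloor> = \<lfloor>\<rho> y / \<delta>\<rfloor>" using e fx fy unfolding b_def by (simp add: eq_nat_nat_iff)
    then have "\<bar>\<rho> x / \<delta> - \<rho> y / \<delta>\<bar> < 1" by linarith
    moreover have "\<rho> x - \<rho> y = \<delta> * (\<rho> x / \<delta> - \<rho> y / \<delta>)" using dpos by (simp add: field_simps)
    ultimately have "\<bar>\<rho> x - \<rho> y\<bar> < \<delta>" using dpos
      by (metis abs_mult abs_of_pos mult.right_neutral mult_strict_left_mono)
    then show "x = y" using sep xS yS by force
  qed
  have img: "b ` S \<subseteq> {0..M}"
  proof
    fix j assume "j \<in> b ` S"
    then obtain x where xS: "x \<in> S" and j: "j = b x" by auto
    have "\<rho> x \<le> 1/2" using bnd xS by auto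
    then have "\<rho> x / \<delta> \<le> (1/2)/\<delta>" using dpos by (intro divide_right_mono) auto
    then have "\<rho> x / \<delta> \<le> 1/(2*\<delta>)" by simp
    then have "\<lfloor>\<rho> x / \<delta>\<rfloor> \<le> \<lfloor>1/(2*\<delta>)\<rfloor>" by (rule floor_mono)
    then show "j \<in> {0..M}" unfolding j b_def M_def by simp
  qed
  have le: "1 / \<rho> x \<le> G (b x)" if xS: "x \<in> S" for x
  proof (cases "b x = 0")
    case True
    have "\<rho> x \<ge> \<delta>/2" using bnd xS by auto
    then have "1 / \<rho> x \<le> 1 / (\<delta>/2)" using dpos by (intro divide_left_mono) auto
    then show ?thesis using True by (simp add: G_def)
  next
    case False
    have px: "\<rho> x / \<delta> \<ge> 0" using bnd xS dpos by auto
    have "real (b x) = of_int \<lfloor>\<rho> x / \<delta>\<rfloor>" using px unfolding b_def by simp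
    also have "\<dots> \<le> \<rho> x / \<delta>" by simp
    finally have "real (b x) * \<delta> \<le> \<rho> x" using dpos by (simp add: le_divide_eq)
    moreover have "real (b x) * \<delta> > 0" using False dpos by simp
    ultimately have "1 / \<rho> x \<le> 1 / (real (b x) * \<delta>)" by (intro divide_left_mono) auto
    then show ?thesis using False by (simp add: G_def)
  qed
  have "(\<Sum>x\<in>S. 1 / \<rho> x) \<le> (\<Sum>x\<in>S. G (b x))" by (intro sum_mono le)
  also have "\<dots> = (\<Sum>j\<in>b ` S. G j)" by (simp add: sum.reindex[OF inj])
  also have "\<dots> \<le> (\<Sum>j\<in>{0..M}. G j)" by (intro sum_mono2 img Gnn) auto
  also have "\<dots> = G 0 + (\<Sum>j\<in>{1..M}. G j)" by (simp add: sum.atLeast_Suc_atMost)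
  also have "(\<Sum>j\<in>{1..M}. G j) = (\<Sum>j\<in>{1..M}. inverse (real j) / \<delta>)"
    by (intro sum.cong) (auto simp: G_def field_simps)
  also have "\<dots> = harm M / \<delta>" by (simp add: harm_def sum_divide_distrib)
  finally show ?thesis by (simp add: G_def M_def add_divide_distrib)
qed

lemma dist_int_minus: "dist_int (- z) = dist_int z"
  unfolding dist_int_def by (simp add: floor_minus ceiling_minus)

lemma sep_key:
  fixes \<alpha> c :: real and N x y :: nat
  assumes hc: "\<forall>n::nat. n \<ge> 1 \<longrightarrow> c \<le> real n * dist_int (real n * \<alpha>)"
    and cpos: "c > 0"
    and x: "x \<in> {N..<2*N}" and y: "y \<in> {N..<2*N}" and xy: "x \<noteq> y"
  shows "c / real N \<le> dist_int (\<alpha> * (real x - real y))"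
proof -
  have main: "c / real N \<le> dist_int (\<alpha> * (real a - real b))"
    if a: "a \<in> {N..<2*N}" and b: "b \<in> {N..<2*N}" and ab: "b < a" for a b
  proof -
    define n where "n = a - b"
    have n1: "n \<ge> 1" and nN: "n < N" using a b ab unfolding n_def by auto
    have rn: "real n = real a - real b" using ab unfolding n_def by simp
    have "c \<le> real n * dist_int (real n * \<alpha>)" using hc n1 by auto
    then have "c / real n \<le> dist_int (real n * \<alpha>)" using n1 by (simp add: divide_le_eq mult.commute)
    moreover have "c / real N \<le> c / real n" using n1 nN cpos by (intro divide_left_mono) auto
    ultimately show ?thesis by (simp add: rn mult.commute)
  qed
  show ?thesis
  proof (cases "y < x")
    case True then show ?thesis using main x y by blast
  next
    case False
    then have "x < y" using xy by simp
    then have "c / real N \<le> dist_int (\<alpha> * (real y - real x))" using main x y by blast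
    also have "\<alpha> * (real y - real x) = - (\<alpha> * (real x - real y))" by (simp add: algebra_simps)
    finally show ?thesis by (simp add: dist_int_minus)
  qed
qed

lemma block_bound:
  fixes \<alpha> c :: real and N :: nat and S :: "nat set"
  assumes hc: "\<forall>n::nat. n \<ge> 1 \<longrightarrow> c \<le> real n * dist_int (real n * \<alpha>)"
    and cpos: "c > 0" and N1: "N \<ge> 1" and SN: "S \<subseteq> {N..<2*N}"
  shows "(\<Sum>x\<in>S. 1 / dist_int (\<alpha> * real x)) \<le> 2 * (2 + harm (nat \<lfloor>real N/(2*c)\<rfloor>)) * (real N / c)"
proof -
  define \<delta> where "\<delta> = c / real N"
  have dpos: "\<delta> > 0" using cpos N1 by (simp add: \<delta>_def)
  have finS: "finite S" using SN finite_subset by blast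
  define \<rho> where "\<rho> x = dist_int (\<alpha> * real x)" for x :: nat
  define S1 where "S1 = {x\<in>S. \<rho> x = \<alpha> * real x - of_int \<lfloor>\<alpha> * real x\<rfloor>}"
  define S2 where "S2 = S - S1"
  have S2c: "\<rho> x = of_int \<lceil>\<alpha> * real x\<rceil> - \<alpha> * real x" if "x \<in> S2" for x
    using that dist_int_cases[of "\<alpha> * real x"] unfolding S2_def S1_def \<rho>_def by auto
  have bnd: "\<forall>x\<in>S. \<delta>/2 \<le> \<rho> x \<and> \<rho> x \<le> 1/2"
  proof
    fix x assume xS: "x \<in> S"
    have x1: "x \<ge> 1" and x2: "x < 2*N" using xS SN N1 by auto
    have "c \<le> real x * dist_int (real x * \<alpha>)" using hc x1 by auto
    then have "c / real x \<le> \<rho> x" using x1 by (simp add: \<rho>_def divide_le_eq mult.commute)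
    moreover have "c / (2 * real N) \<le> c / real x" using x1 x2 cpos by (intro divide_left_mono) auto
    ultimately have "\<delta>/2 \<le> \<rho> x" by (simp add: \<delta>_def)
    then show "\<delta>/2 \<le> \<rho> x \<and> \<rho> x \<le> 1/2" using dist_int_le_half[of "\<alpha> * real x"] by (simp add: \<rho>_def)
  qed
  have sep1: "\<forall>x\<in>S1. \<forall>y\<in>S1. x \<noteq> y \<longrightarrow> \<delta> \<le> \<bar>\<rho> x - \<rho> y\<bar>"
  proof (intro ballI impI)
    fix x y assume xS: "x \<in> S1" and yS: "y \<in> S1" and xy: "x \<noteq> y"
    have xN: "x \<in> {N..<2*N}" and yN: "y \<in> {N..<2*N}" using xS yS SN unfolding S1_def S1_def by auto
    have "\<rho> x - \<rho> y = \<alpha> * (real x - real y) - of_int (\<lfloor>\<alpha> * real x\<rfloor> - \<lfloor>\<alpha> * real y\<rfloor>)"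
      using xS yS unfolding S1_def by (simp add: algebra_simps)
    then have "dist_int (\<alpha> * (real x - real y)) \<le> \<bar>\<rho> x - \<rho> y\<bar>"
      using dist_int_le[of "\<alpha> * (real x - real y)" "\<lfloor>\<alpha> * real x\<rfloor> - \<lfloor>\<alpha> * real y\<rfloor>"] by simp
    moreover have "\<delta> \<le> dist_int (\<alpha> * (real x - real y))" unfolding \<delta>_def
      using sep_key[OF hc cpos xN yN xy] .
    ultimately show "\<delta> \<le> \<bar>\<rho> x - \<rho> y\<bar>" by linarith
  qed
  have sep2: "\<forall>x\<in>S2. \<forall>y\<in>S2. x \<noteq> y \<longrightarrow> \<delta> \<le> \<bar>\<rho> x - \<rho> y\<bar>"
  proof (intro ballI impI)
    fix x y assume xS: "x \<in> S2" and yS: "y \<in> S2" and xy: "x \<noteq> y"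
    have xN: "x \<in> {N..<2*N}" and yN: "y \<in> {N..<2*N}" using xS yS SN unfolding S2_def S1_def by auto
    have "\<rho> x - \<rho> y = - (\<alpha> * (real x - real y) - of_int (\<lceil>\<alpha> * real x\<rceil> - \<lceil>\<alpha> * real y\<rceil>))"
      using S2c[OF xS] S2c[OF yS] by (simp add: algebra_simps)
    then have "\<bar>\<rho> x - \<rho> y\<bar> = \<bar>\<alpha> * (real x - real y) - of_int (\<lceil>\<alpha> * real x\<rceil> - \<lceil>\<alpha> * real y\<rceil>)\<bar>"
      by simp
    then have "dist_int (\<alpha> * (real x - real y)) \<le> \<bar>\<rho> x - \<rho> y\<bar>"
      using dist_int_le[of "\<alpha> * (real x - real y)" "\<lceil>\<alpha> * real x\<rceil> - \<lceil>\<alpha> * real y\<rceil>"] by simp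
    moreover have "\<delta> \<le> dist_int (\<alpha> * (real x - real y))" unfolding \<delta>_def
      using sep_key[OF hc cpos xN yN xy] .
    ultimately show "\<delta> \<le> \<bar>\<rho> x - \<rho> y\<bar>" by linarith
  qed
  have f1: "finite S1" and f2: "finite S2" using finS unfolding S1_def S2_def by auto
  have b1: "\<forall>x\<in>S1. \<delta>/2 \<le> \<rho> x \<and> \<rho> x \<le> 1/2" using bnd unfolding S1_def by auto
  have b2: "\<forall>x\<in>S2. \<delta>/2 \<le> \<rho> x \<and> \<rho> x \<le> 1/2" using bnd unfolding S2_def by auto
  have e1: "1/(2*\<delta>) = real N/(2*c)" unfolding \<delta>_def using N1 by simp
  have "(\<Sum>x\<in>S. 1 / \<rho> x) = (\<Sum>x\<in>S1. 1 / \<rho> x) + (\<Sum>x\<in>S2. 1 / \<rho> x)"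
  proof -
    have "S1 \<subseteq> S" by (auto simp: S1_def)
    from sum.subset_diff[OF this finS, of "\<lambda>x. 1 / \<rho> x"] show ?thesis unfolding S2_def by (simp add: add.commute)
  qed
  also have "\<dots> \<le> (2 + harm (nat \<lfloor>1/(2*\<delta>)\<rfloor>)) / \<delta> + (2 + harm (nat \<lfloor>1/(2*\<delta>)\<rfloor>)) / \<delta>"
    by (intro add_mono sep_bound dpos f1 f2 b1 b2 sep1 sep2)
  also have "\<dots> = 2 * (2 + harm (nat \<lfloor>real N/(2*c)\<rfloor>)) * (real N / c)"
    unfolding e1 using cpos N1 by (simp add: \<delta>_def field_simps)
  finally show ?thesis by (simp add: \<rho>_def)
qed

lemma harm_le_ln: "harm n \<le> 1 + ln (real n + 1)"
proof -
  have "harm (Suc n) - ln (real (Suc n)) \<le> harm 1 - ln (real (1::nat))"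
    by (rule euler_mascheroni_sequence_decreasing) auto
  then have "harm (Suc n) \<le> 1 + ln (real n + 1)" by (simp add: harm_def add.commute)
  moreover have "harm n \<le> (harm (Suc n) :: real)" by (simp add: harm_Suc)
  ultimately show ?thesis by linarith
qed

lemma block2:
  fixes \<alpha> c :: real and k :: nat and S :: "nat set"
  assumes hc: "\<forall>n::nat. n \<ge> 1 \<longrightarrow> c \<le> real n * dist_int (real n * \<alpha>)"
    and cpos: "c > 0" and k1: "k \<ge> 1" and SN: "S \<subseteq> {2^k..<2*2^k}"
  shows "(\<Sum>x\<in>S. 1 / dist_int (\<alpha> * real x)) \<le> (2 * (4 + ln (1/(2*c) + 1)) / c) * 2^k * real k"
proof -
  define N :: nat where "N = 2^k"
  define D where "D = 1/(2*c) + 1"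
  define L where "L = ln D"
  have D1: "D \<ge> 1" using cpos by (simp add: D_def)
  have L0: "L \<ge> 0" using D1 by (simp add: L_def)
  have N1: "N \<ge> 1" by (simp add: N_def)
  define M where "M = nat \<lfloor>real N/(2*c)\<rfloor>"
  have "real M \<le> real N/(2*c)" unfolding M_def using cpos by (simp add: of_nat_nat)
  moreover have "real N \<ge> 1" using N1 by simp
  ultimately have "real M + 1 \<le> real N/(2*c) + real N" by linarith
  also have "\<dots> = real N * D" unfolding D_def by (simp add: field_simps)
  finally have "real M + 1 \<le> real N * D" .
  then have "ln (real M + 1) \<le> ln (real N * D)" using D1 N1 by (intro ln_mono) auto
  also have "\<dots> = real k * ln 2 + L" using D1 unfolding N_def L_def
    by (simp add: ln_mult ln_realpow)
  also have "\<dots> \<le> real k + L" using ln_2_less_1 by (simp add: mult_left_le)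
  finally have hM: "harm M \<le> 1 + real k + L" using harm_le_ln[of M] by linarith
  have "(\<Sum>x\<in>S. 1 / dist_int (\<alpha> * real x)) \<le> 2 * (2 + harm M) * (real N / c)"
    using block_bound[OF hc cpos N1] SN unfolding M_def N_def by simp
  also have "\<dots> \<le> 2 * (3 + real k + L) * (real N / c)"
    using hM cpos by (intro mult_right_mono) auto
  also have "3 + real k + L \<le> (4 + L) * real k"
  proof -
    have "L * 1 \<le> L * real k" using k1 L0 by (intro mult_left_mono) auto
    then show ?thesis using k1 by (simp add: algebra_simps)
  qed
  then have "2 * (3 + real k + L) * (real N / c) \<le> 2 * ((4 + L) * real k) * (real N / c)"
    using cpos by (intro mult_right_mono) auto
  also have "\<dots> = (2 * (4 + ln (1/(2*c) + 1)) / c) * 2^k * real k"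
    unfolding L_def D_def N_def by simp
  finally show ?thesis .
qed

theorem lemma2:
  fixes \<alpha> :: real
  assumes "(INF q\<in>{1::nat..}. real q * dist_int (real q * \<alpha>)) > 0"
  shows "\<exists>C>0. \<forall>q::nat. q \<ge> 2 \<longrightarrow>
           (\<Sum>x=q..q^3. 1 / (dist_int (\<alpha> * real x) * real x * (log 2 (real x))^2)) \<le> C"
proof -
  define c where "c = (INF q\<in>{1::nat..}. real q * dist_int (real q * \<alpha>))"
  have cpos: "c > 0" using assms by (simp add: c_def)
  have bdd: "bdd_below ((\<lambda>q. real q * dist_int (real q * \<alpha>)) ` {1::nat..})"
    by (rule bdd_belowI2[where m=0]) (simp add: dist_int_nonneg)
  have hc: "\<forall>n::nat. n \<ge> 1 \<longrightarrow> c \<le> real n * dist_int (real n * \<alpha>)"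
  proof (intro allI impI)
    fix n :: nat assume "n \<ge> 1"
    then show "c \<le> real n * dist_int (real n * \<alpha>)" unfolding c_def
      by (intro cINF_lower[OF bdd]) auto
  qed
  define E where "E = 2 * (4 + ln (1/(2*c) + 1)) / c"
  have l0: "ln (1/(2*c) + 1) \<ge> 0" using cpos by simp
  have l4: "4 + ln (1/(2*c) + 1) > 0" using l0 by linarith
  have Epos: "E > 0" unfolding E_def
    by (rule divide_pos_pos[OF mult_pos_pos[OF _ l4] cpos]) simp
  define h where "h x = 1 / (dist_int (\<alpha> * real x) * real x * (log 2 (real x))^2)" for x :: nat
  have fiber: "sum h F \<le> E / real k" if k1: "k \<ge> 1" and F: "F \<subseteq> {2^k..<2*2^k}" for F k
  proof -
    have finF: "finite F" using F finite_subset by blast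
    have hle: "h x \<le> (1 / dist_int (\<alpha> * real x)) / (2^k * (real k)^2)" if xF: "x \<in> F" for x
    proof -
      have xk: "2^k \<le> x" using F xF by auto
      then have xr: "(2::real)^k \<le> real x" by (metis of_nat_le_iff of_nat_numeral of_nat_power)
      have xpos: "real x > 0" using xr by (smt (verit) zero_less_power)
      have "log 2 ((2::real)^k) \<le> log 2 (real x)" using xr xpos by (subst log_le_cancel_iff) auto
      then have lk: "real k \<le> log 2 (real x)" by (simp add: log_nat_power)
      have kpos: "real k > 0" using k1 by simp
      have "(2::real)^k * (real k)^2 \<le> real x * (log 2 (real x))^2"
        using xr lk kpos by (intro mult_mono power_mono) auto
      moreover have "(2::real)^k * (real k)^2 > 0" using kpos by simp
      ultimately have "1 / (real x * (log 2 (real x))^2) \<le> 1 / (2^k * (real k)^2)"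
        by (intro divide_left_mono) auto
      then have "(1 / dist_int (\<alpha> * real x)) * (1 / (real x * (log 2 (real x))^2))
          \<le> (1 / dist_int (\<alpha> * real x)) * (1 / (2^k * (real k)^2))"
        by (intro mult_left_mono) (simp_all add: dist_int_nonneg)
      then show ?thesis unfolding h_def by (simp add: mult.assoc)
    qed
    have "sum h F \<le> (\<Sum>x\<in>F. (1 / dist_int (\<alpha> * real x)) / (2^k * (real k)^2))"
      by (intro sum_mono hle)
    also have "\<dots> = (\<Sum>x\<in>F. 1 / dist_int (\<alpha> * real x)) / (2^k * (real k)^2)"
      by (simp add: sum_divide_distrib)
    also have "\<dots> \<le> (E * 2^k * real k) / (2^k * (real k)^2)"
      using block2[OF hc cpos k1 F] k1 unfolding E_def by (intro divide_right_mono) auto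
    also have "\<dots> = E / real k" using k1 by (simp add: power2_eq_square)
    finally show ?thesis .
  qed
  show ?thesis
  proof (intro exI[of _ "5*E"] conjI allI impI)
    show "5*E > 0" using Epos by simp
    fix q :: nat assume q2: "q \<ge> 2"
    define K where "K = floor_log q"
    define T where "T = {K..3*K+2}"
    define S where "S = {q..q^3}"
    have "floor_log (2^1::nat) = 1" by (rule floor_log_power)
    then have K1: "K \<ge> 1" using floor_log_le_iff[OF q2] unfolding K_def by simp
    have qlt: "q < 2*2^K" unfolding K_def by (rule floor_log_exp2_gt)
    have img: "floor_log ` S \<subseteq> T"
    proof
      fix j assume "j \<in> floor_log ` S"
      then obtain x where xS: "x \<in> S" and j: "j = floor_log x" by auto
      have qx: "q \<le> x" and x3: "x \<le> q^3" using xS by (auto simp: S_def)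
      have "K \<le> j" unfolding K_def j by (rule floor_log_le_iff[OF qx])
      moreover have "2^j \<le> x" unfolding j using qx q2 by (intro floor_log_exp2_le) auto
      moreover have "q^3 < (2*2^K)^3" using qlt by (intro power_strict_mono) auto
      moreover have "((2::nat)*2^K)^3 = 2^(3*K+3)" by (simp add: power_mult_distrib power_mult[symmetric] power_add algebra_simps)
      ultimately have "(2::nat)^j < 2^(3*K+3)" using x3 by linarith
      then have "j < 3*K+3" by (rule power_less_imp_less_exp[rotated]) simp
      then show "j \<in> T" using \<open>K \<le> j\<close> unfolding T_def by simp
    qed
    have "(\<Sum>x=q..q^3. 1 / (dist_int (\<alpha> * real x) * real x * (log 2 (real x))^2)) = sum h S"
      unfolding h_def S_def by simp
    also have "\<dots> = (\<Sum>k\<in>T. sum h {x. x \<in> S \<and> floor_log x = k})"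
    proof -
      have fS: "finite S" and fT: "finite T" by (simp_all add: S_def T_def)
      show ?thesis by (rule sum.group[OF fS fT img, symmetric])
    qed
    also have "\<dots> \<le> (\<Sum>k\<in>T. E / real k)"
    proof (rule sum_mono)
      fix k assume kT: "k \<in> T"
      then have k1: "k \<ge> 1" using K1 unfolding T_def by auto
      have "{x. x \<in> S \<and> floor_log x = k} \<subseteq> {2^k..<2*2^k}"
      proof
        fix x assume "x \<in> {x. x \<in> S \<and> floor_log x = k}"
        then have xS: "x \<in> S" and xk: "floor_log x = k" by auto
        have "x > 0" using xS q2 by (auto simp: S_def)
        then have "2^k \<le> x" using floor_log_exp2_le[of x] xk by simp
        moreover have "x < 2*2^k" using floor_log_exp2_gt[of x] xk by simp
        ultimately show "x \<in> {2^k..<2*2^k}" by simp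
      qed
      then show "sum h {x. x \<in> S \<and> floor_log x = k} \<le> E / real k" by (rule fiber[OF k1])
    qed
    also have "\<dots> \<le> (\<Sum>k\<in>T. E / real K)"
    proof (rule sum_mono)
      fix k assume "k \<in> T"
      then have "real K \<le> real k" unfolding T_def by simp
      then show "E / real k \<le> E / real K" using K1 Epos by (intro divide_left_mono) auto
    qed
    also have "\<dots> = real (2*K+3) * (E / real K)" unfolding T_def by simp
    also have "\<dots> \<le> 5 * E"
    proof -
      have "real (2*K+3) \<le> 5 * real K" using K1 by simp
      then have "real (2*K+3) * (E / real K) \<le> (5 * real K) * (E / real K)"
        using Epos K1 by (intro mult_right_mono) auto
      also have "\<dots> = 5 * E" using K1 by simp
      finally show ?thesis .
    qed
    finally show "(\<Sum>x=q..q^3. 1 / (dist_int (\<alpha> * real x) * real x * (log 2 (real x))^2)) \<le> 5 * E" .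
  qed
qed

end
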